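(* Let $N\ge2$, $h=1/N$, and index vectors $Z\in\mathbb{R}^{(N+1)^2}$ by grid points $(x_i,y_j)=(ih,jh)$, $0\le i,j\le N$, writing $z_{i,j}$ for the components; let $Z_I\in\mathbb{R}^{(N-1)^2}$ denote the components at interior points $1\le i,j\le N-1$. Let $\mathcal{L}_h:\mathbb{R}^{(N+1)^2}\to\mathbb{R}^{(N-1)^2}$ be the five-point operator $$(\mathcal{L}_hZ)_{i,j}=-\frac{z_{i-1,j}+z_{i+1,j}-4z_{i,j}+z_{i,j-1}+z_{i,j+1}}{h^2},\quad 1\le i,j\le N-1.$$ Let $\beta>0$ and $\Phi,\Psi\in\mathbb{R}^{(N+1)^2}$ satisfy $$\mathcal{L}_h\Psi=-\beta\Phi_I,\qquad \mathcal{L}_h\Phi=\Psi_I .$$ Then $\mathcal{L}_h(\Psi^2+\beta\Phi^2)\le 0$ componentwise, where $\Psi^2,\Phi^2$ denote componentwise squares. *)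

theory Defs
  imports Complex_Main
begin

text \<open>Grid vectors in R^((N+1)^2) are represented as functions z :: nat => nat => real,
  with z i j the component at grid point (i h, j h), 0 <= i, j <= N; values outside
  this range are irrelevant.\<close>

definition five_point :: "nat \<Rightarrow> (nat \<Rightarrow> nat \<Rightarrow> real) \<Rightarrow> nat \<Rightarrow> nat \<Rightarrow> real" where
  "five_point N z i j =
     - (z (i-1) j + z (i+1) j - 4 * z i j + z i (j-1) + z i (j+1)) / (1 / real N)^2"

definition interior :: "nat \<Rightarrow> nat \<Rightarrow> nat \<Rightarrow> bool" where
  "interior N i j \<longleftrightarrow> 1 \<le> i \<and> i \<le> N - 1 \<and> 1 \<le> j \<and> j \<le> N - 1"

end

theory Submission
  imports Defs
begin

theorem lemma4p1:
  fixes N :: nat and \<beta> :: real and \<Phi> \<Psi> :: "nat \<Rightarrow> nat \<Rightarrow> real"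
  assumes "N \<ge> 2" and "\<beta> > 0"
    and "\<And>i j. interior N i j \<Longrightarrow> five_point N \<Psi> i j = - \<beta> * \<Phi> i j"
    and "\<And>i j. interior N i j \<Longrightarrow> five_point N \<Phi> i j = \<Psi> i j"
  shows "\<And>i j. interior N i j \<Longrightarrow>
           five_point N (\<lambda>a b. (\<Psi> a b)^2 + \<beta> * (\<Phi> a b)^2) i j \<le> 0"
proof -
  fix i j assume I: "interior N i j"
  define h where "h = (1 / real N)^2"
  have hp: "h > 0" using assms(1) by (simp add: h_def)
  define DP where "DP = \<Psi> (i-1) j + \<Psi> (i+1) j - 4 * \<Psi> i j + \<Psi> i (j-1) + \<Psi> i (j+1)"
  define DF where "DF = \<Phi> (i-1) j + \<Phi> (i+1) j - 4 * \<Phi> i j + \<Phi> i (j-1) + \<Phi> i (j+1)"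
  have e1: "- DP / h = - \<beta> * \<Phi> i j" using assms(3)[OF I] by (simp add: five_point_def DP_def h_def)
  have e2: "- DF / h = \<Psi> i j" using assms(4)[OF I] by (simp add: five_point_def DF_def h_def)
  have d1: "DP = \<beta> * \<Phi> i j * h" using e1 hp by (simp add: field_simps)
  have d2: "DF = - \<Psi> i j * h" using e2 hp by (simp add: field_simps)
  define S where "S = (\<Psi> (i-1) j)^2 + \<beta> * (\<Phi> (i-1) j)^2 + ((\<Psi> (i+1) j)^2 + \<beta> * (\<Phi> (i+1) j)^2)
     - 4 * ((\<Psi> i j)^2 + \<beta> * (\<Phi> i j)^2) + ((\<Psi> i (j-1))^2 + \<beta> * (\<Phi> i (j-1))^2)
     + ((\<Psi> i (j+1))^2 + \<beta> * (\<Phi> i (j+1))^2)"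
  define A where "A = (\<Psi> (i-1) j - \<Psi> i j)^2 + (\<Psi> (i+1) j - \<Psi> i j)^2 + (\<Psi> i (j-1) - \<Psi> i j)^2 + (\<Psi> i (j+1) - \<Psi> i j)^2"
  define B where "B = (\<Phi> (i-1) j - \<Phi> i j)^2 + (\<Phi> (i+1) j - \<Phi> i j)^2 + (\<Phi> i (j-1) - \<Phi> i j)^2 + (\<Phi> i (j+1) - \<Phi> i j)^2"
  have eq: "S = A + \<beta> * B + (2 * \<Psi> i j * DP + 2 * \<beta> * \<Phi> i j * DF)"
    unfolding S_def DP_def DF_def A_def B_def by (simp add: power2_eq_square algebra_simps)
  have z: "2 * \<Psi> i j * DP + 2 * \<beta> * \<Phi> i j * DF = 0" using d1 d2 by (simp add: algebra_simps)
  have "A \<ge> 0" unfolding A_def by simp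
  moreover have "B \<ge> 0" unfolding B_def by simp
  ultimately have "S \<ge> 0" using assms(2) eq z by simp
  then show "five_point N (\<lambda>a b. (\<Psi> a b)^2 + \<beta> * (\<Phi> a b)^2) i j \<le> 0"
    using hp unfolding five_point_def S_def h_def[symmetric] by (simp add: divide_nonpos_pos)
qed

end
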